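(* Let $P,Q,R_0,R_1$ be integers with $P>0$, $Q<0$, $R_0,R_1$ positive integers, and $\gcd(P,Q)=\gcd(R_1,Q)=1$. Let $(R_n)_{n\ge0}$ be given by $R_{n+2}=PR_{n+1}-QR_n$ ($n\ge0$), and let $\alpha,\beta$ be the roots of $x^2-Px+Q$ with $|\alpha|\ge|\beta|$ (here $\alpha>0>\beta$). Then for all positive integers $n,m$ with $n\geq 2$ and $m\leq \lfloor (n+1)/2\rfloor+1$, \[\mathrm{lcm}(R_m,R_{m+1},\dots,R_n)\geq \gcd(R_0,R_1)\left(\frac{R_1+R_0|\beta|}{\gcd(R_0,R_1)}\right)^{\frac{n-1}{2}}\alpha^{\frac{n^2}{4}-\frac{n}{2}-\frac{7}{4}}.\] *)

theory Defs
  imports "HOL-Analysis.Analysis"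
begin

end

theory Submission
  imports Defs
begin

fun lucU :: "int \<Rightarrow> int \<Rightarrow> nat \<Rightarrow> int" where
  "lucU P Q 0 = 0"
| "lucU P Q (Suc 0) = 1"
| "lucU P Q (Suc (Suc k)) = P * lucU P Q (Suc k) - Q * lucU P Q k"

lemma lucU_rec: "lucU P Q (k + 2) = P * lucU P Q (k + 1) - Q * lucU P Q k"
  by (simp add: numeral_2_eq_2)

lemma lucU_pos:
  assumes "P > 0" "Q < 0"
  shows "lucU P Q k \<ge> 0 \<and> lucU P Q (k + 1) > 0"
proof (induction k)
  case 0 then show ?case by simp
next
  case (Suc k)
  have "lucU P Q (Suc k + 1) = P * lucU P Q (k+1) - Q * lucU P Q k"
    using lucU_rec[of P Q k] by simp
  moreover have "P * lucU P Q (k+1) > 0" using Suc assms by simp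
  moreover have "Q * lucU P Q k \<le> 0" using Suc assms by (simp add: mult_nonpos_nonneg)
  ultimately show ?case using Suc by simp
qed

lemma R_pos:
  fixes R :: "nat \<Rightarrow> int"
  assumes "P > 0" "Q < 0" "R 0 > 0" "R 1 > 0"
    and rec: "\<And>k. R (k + 2) = P * R (k + 1) - Q * R k"
  shows "R k > 0 \<and> R (k + 1) > 0"
proof (induction k)
  case 0 then show ?case using assms by simp
next
  case (Suc k)
  have "R (Suc k + 1) = P * R (k+1) - Q * R k"
    using rec[of k] by simp
  moreover have "P * R (k+1) > 0" using Suc assms by simp
  moreover have "Q * R k < 0" using Suc assms by (simp add: mult_neg_pos)
  ultimately show ?case using Suc by simp
qed

lemma R_shift:
  fixes R :: "nat \<Rightarrow> int"
  assumes rec: "\<And>k. R (k + 2) = P * R (k + 1) - Q * R k"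
  shows "R (x + N + 1) = lucU P Q (N + 1) * R (x + 1) - Q * lucU P Q N * R x
       \<and> R (x + (N + 1) + 1) = lucU P Q (N + 2) * R (x + 1) - Q * lucU P Q (N + 1) * R x"
proof (induction N)
  case 0
  then show ?case using rec[of x] by (simp add: numeral_2_eq_2 add.commute)
next
  case (Suc N)
  have e1: "R (x + N + 1) = lucU P Q (N + 1) * R (x + 1) - Q * lucU P Q N * R x"
    using Suc by blast
  have e2: "R (x + N + 2) = lucU P Q (N + 2) * R (x + 1) - Q * lucU P Q (N + 1) * R x"
    using Suc by (metis add_2_eq_Suc' add.assoc Suc_eq_plus1)
  have "R (x + (Suc N + 1) + 1) = P * R (x + N + 2) - Q * R (x + N + 1)"
    using rec[of "x + N + 1"] by (simp add: algebra_simps)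
  also have "\<dots> = P * (lucU P Q (N + 2) * R (x + 1) - Q * lucU P Q (N + 1) * R x)
       - Q * (lucU P Q (N + 1) * R (x + 1) - Q * lucU P Q N * R x)"
    unfolding e1 e2 ..
  also have "\<dots> = (P * lucU P Q (N + 2) - Q * lucU P Q (N + 1)) * R (x + 1)
       - Q * (P * lucU P Q (N + 1) - Q * lucU P Q N) * R x"
    by (simp add: algebra_simps)
  also have "\<dots> = lucU P Q (Suc N + 2) * R (x + 1) - Q * lucU P Q (Suc N + 1) * R x"
    by (simp add: numeral_2_eq_2)
  finally show ?case using e2 by (simp add: algebra_simps)
qed

lemma R_coprime:
  fixes R :: "nat \<Rightarrow> int"
  assumes "gcd P Q = 1" "gcd (R 1) Q = 1"
    and rec: "\<And>k. R (k + 2) = P * R (k + 1) - Q * R k"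
  shows "coprime (R (k + 1)) Q"
proof (induction k)
  case 0 then show ?case using assms by (simp add: coprime_iff_gcd_eq_1)
next
  case (Suc k)
  have "R (Suc k + 1) = P * R (k + 1) + (- R k) * Q" using rec[of k] by simp
  have "gcd Q ((- R k) * Q + P * R (k + 1)) = gcd Q (P * R (k + 1))"
    by (rule gcd_add_mult)
  then have "gcd (R (Suc k + 1)) Q = gcd (P * R (k + 1)) Q"
    using \<open>R (Suc k + 1) = P * R (k + 1) + (- R k) * Q\<close> by (metis add.commute gcd.commute)
  moreover have "coprime (P * R (k + 1)) Q"
  proof -
    have "coprime P Q" using assms(1) by (simp add: coprime_iff_gcd_eq_1)
    then show ?thesis using Suc by simp
  qed
  ultimately show ?case by (simp add: coprime_iff_gcd_eq_1)
qed

lemma R_gcd: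
  fixes R :: "nat \<Rightarrow> int"
  assumes "gcd P Q = 1" "gcd (R 1) Q = 1"
    and rec: "\<And>k. R (k + 2) = P * R (k + 1) - Q * R k"
  shows "gcd (R k) (R (k + 1)) = gcd (R 0) (R 1)"
proof (induction k)
  case 0 then show ?case by simp
next
  case (Suc k)
  have cp: "coprime (R (k + 1)) Q" using R_coprime[OF assms] .
  have "R (Suc k + 1) = P * R (k + 1) + (- Q * R k)" using rec[of k] by simp
  then have "gcd (R (k+1)) (R (Suc k + 1)) = gcd (R (k+1)) (- Q * R k)"
    by (simp only: gcd_add_mult)
  also have "\<dots> = gcd (R (k+1)) (Q * R k)" by simp
  also have "\<dots> = gcd (R (k+1)) (R k)" using cp by (rule gcd_mult_right_left_cancel)
  finally show ?case using Suc by (simp add: gcd.commute)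
qed


lemma gcd_far:
  fixes R :: "nat \<Rightarrow> int"
  assumes gcdc: "\<And>k. gcd (R k) (R (k+1)) = g"
    and sh: "R (x + N + 1) = lucU P Q (N + 1) * R (x + 1) - Q * lucU P Q N * R x"
  shows "gcd (R x) (R (x + N + 1)) dvd g * lucU P Q (N + 1)"
proof -
  let ?d = "gcd (R x) (R (x + N + 1))"
  have "lucU P Q (N + 1) * R (x + 1) = R (x + N + 1) + (Q * lucU P Q N) * R x"
    using sh by simp
  moreover have "?d dvd R (x + N + 1) + (Q * lucU P Q N) * R x" by simp
  ultimately have h1: "?d dvd lucU P Q (N + 1) * R (x + 1)" by simp
  have h2: "?d dvd lucU P Q (N + 1) * R x" by simp
  have "?d dvd gcd (lucU P Q (N + 1) * R x) (lucU P Q (N + 1) * R (x + 1))"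
    by (rule gcd_greatest[OF h2 h1])
  also have "\<dots> = normalize (lucU P Q (N + 1) * g)"
    using gcdc[of x] by (simp add: gcd_mult_left)
  finally show ?thesis by (simp add: mult.commute)
qed

lemma window_dvd:
  fixes R :: "nat \<Rightarrow> int"
  assumes gcdc: "\<And>k. gcd (R k) (R (k+1)) = g"
    and sh: "\<And>x N. R (x + N + 1) = lucU P Q (N + 1) * R (x + 1) - Q * lucU P Q N * R x"
  shows "(\<forall>i\<le>N. R (x+i) dvd z) \<longrightarrow>
     (\<Prod>i\<le>N. R (x+i)) dvd z * g^N * (\<Prod>k\<in>{1..N}. lucU P Q k)"
proof (induction N arbitrary: x)
  case 0 then show ?case by simp
next
  case (Suc N)
  show ?case
  proof
    assume H: "\<forall>i\<le>Suc N. R (x+i) dvd z"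
    define C where "C = z * g^N * (\<Prod>k\<in>{1..N}. lucU P Q k)"
    have A: "(\<Prod>i\<le>N. R (x+i)) dvd C"
      using Suc.IH[of x] H unfolding C_def by simp
    have B: "(\<Prod>i\<le>N. R (Suc x+i)) dvd C"
      using Suc.IH[of "Suc x"] H unfolding C_def by fastforce
    have F1: "(\<Prod>i\<le>Suc N. R (x+i)) = (\<Prod>i\<le>N. R (x+i)) * R (x + N + 1)"
      by simp
    have F2: "(\<Prod>i\<le>Suc N. R (x+i)) = R x * (\<Prod>i\<le>N. R (Suc x+i))"
      by (simp add: prod.atMost_Suc_shift del: prod.atMost_Suc)
    have d1: "(\<Prod>i\<le>Suc N. R (x+i)) dvd C * R (x + N + 1)"
      unfolding F1 using A by (simp add: mult_dvd_mono)
    have d2: "(\<Prod>i\<le>Suc N. R (x+i)) dvd C * R x"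
      unfolding F2 using B by (simp add: mult_dvd_mono mult.commute)
    have "(\<Prod>i\<le>Suc N. R (x+i)) dvd gcd (C * R x) (C * R (x + N + 1))"
      using d1 d2 by simp
    also have "\<dots> = normalize (C * gcd (R x) (R (x + N + 1)))"
      by (rule gcd_mult_left)
    also have "\<dots> dvd C * (g * lucU P Q (N + 1))"
      using gcd_far[OF gcdc sh[of x N]] by (simp add: mult_dvd_mono)
    also have "\<dots> = z * g ^ Suc N * (\<Prod>k\<in>{1..Suc N}. lucU P Q k)"
      unfolding C_def by (simp add: prod.nat_ivl_Suc' algebra_simps)
    finally show "(\<Prod>i\<le>Suc N. R (x+i)) dvd z * g ^ Suc N * (\<Prod>k\<in>{1..Suc N}. lucU P Q k)" .
  qed
qed


lemma U_real:
  fixes a b :: real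
  assumes "real_of_int P = a + b" "real_of_int Q = a * b"
  shows "real_of_int (lucU P Q (k+1)) - b * real_of_int (lucU P Q k) = a^k"
proof (induction k)
  case 0 then show ?case by simp
next
  case (Suc k)
  have "lucU P Q (Suc k + 1) = P * lucU P Q (k + 1) - Q * lucU P Q k"
    using lucU_rec[of P Q k] by simp
  then have "real_of_int (lucU P Q (Suc k + 1)) - b * real_of_int (lucU P Q (Suc k))
     = (a + b) * real_of_int (lucU P Q (k + 1)) - a * b * real_of_int (lucU P Q k)
       - b * real_of_int (lucU P Q (k + 1))"
    using assms by simp
  also have "\<dots> = a * (real_of_int (lucU P Q (k+1)) - b * real_of_int (lucU P Q k))"
    by (simp add: algebra_simps)
  finally show ?case using Suc by simp
qed

lemma U_le:
  fixes a b :: real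
  assumes "real_of_int P = a + b" "real_of_int Q = a * b" "P > 0" "Q < 0" "b \<le> 0"
  shows "real_of_int (lucU P Q (k+1)) \<le> a^k"
proof -
  have "lucU P Q k \<ge> 0" using lucU_pos[OF assms(3,4)] by blast
  then have "b * real_of_int (lucU P Q k) \<le> 0" using assms(5)
    by (simp add: mult_nonpos_nonneg)
  then show ?thesis using U_real[OF assms(1,2), of k] by linarith
qed

lemma R_real:
  fixes a b :: real and R :: "nat \<Rightarrow> int"
  assumes "real_of_int P = a + b" "real_of_int Q = a * b"
    and rec: "\<And>k. R (k + 2) = P * R (k + 1) - Q * R k"
  shows "real_of_int (R (k+1)) - b * real_of_int (R k) = a^k * (real_of_int (R 1) - b * real_of_int (R 0))"
proof (induction k)
  case 0 then show ?case by simp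
next
  case (Suc k)
  have "R (Suc k + 1) = P * R (k + 1) - Q * R k"
    using rec[of k] by simp
  then have "real_of_int (R (Suc k + 1)) - b * real_of_int (R (Suc k))
     = (a + b) * real_of_int (R (k + 1)) - a * b * real_of_int (R k)
       - b * real_of_int (R (k + 1))"
    using assms by simp
  also have "\<dots> = a * (real_of_int (R (k+1)) - b * real_of_int (R k))"
    by (simp add: algebra_simps)
  finally show ?case using Suc by simp
qed

lemma R_bounds:
  fixes a b :: real and R :: "nat \<Rightarrow> int"
  assumes "real_of_int P = a + b" "real_of_int Q = a * b"
    and rec: "\<And>k. R (k + 2) = P * R (k + 1) - Q * R k"
    and "P > 0" "Q < 0" "R 0 > 0" "R 1 > 0" "b \<le> 0" "a > 0"
  shows "real_of_int (R (k+2)) \<ge> a^k * (real_of_int (R 1) - b * real_of_int (R 0))"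
proof -
  define c where "c = real_of_int (R 1) - b * real_of_int (R 0)"
  have "b * real_of_int (R 0) \<le> 0" using assms(6,8) by (simp add: mult_nonpos_nonneg)
  then have c0: "c \<ge> 0" unfolding c_def using assms(7) by simp
  have pos: "R j > 0" for j using R_pos[OF assms(4-7) rec] by blast
  have up: "real_of_int (R (k+1)) \<le> a^k * c"
  proof -
    have "b * real_of_int (R k) \<le> 0" using assms(8) pos[of k]
      by (simp add: mult_nonpos_nonneg)
    then show ?thesis using R_real[OF assms(1,2) rec, of k] unfolding c_def by linarith
  qed
  have eq: "real_of_int (R (k+2)) = a^(k+1) * c + b * real_of_int (R (k+1))"
    using R_real[OF assms(1,2) rec, of "k+1"] unfolding c_def by (simp add: add.assoc)
  have "b * real_of_int (R (k+1)) \<ge> b * (a^k * c)"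
    using up assms(8) by (rule mult_left_mono_neg)
  then have "real_of_int (R (k+2)) \<ge> a^k * c * (a + b)"
    using eq by (simp add: algebra_simps)
  moreover have "a + b \<ge> 1"
  proof -
    have "P \<ge> 1" using assms(4) by simp
    then have "real_of_int P \<ge> 1" by simp
    then show ?thesis using assms(1) by simp
  qed
  moreover have "a^k * c \<ge> 0" using c0 assms(9) by simp
  ultimately have "real_of_int (R (k+2)) \<ge> a^k * c"
    using mult_left_mono[of 1 "a + b" "a^k * c"] by simp
  then show ?thesis unfolding c_def .
qed


lemma window_lower:
  fixes a b :: real and R :: "nat \<Rightarrow> int"
  assumes ab: "real_of_int P = a + b" "real_of_int Q = a * b"
    and rec: "\<And>k. R (k + 2) = P * R (k + 1) - Q * R k"
    and h: "P > 0" "Q < 0" "R 0 > 0" "R 1 > 0" "b \<le> 0" "a > 0"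
  shows "real_of_int (\<Prod>i\<le>N. R (y+2+i)) \<ge>
    (real_of_int (R 1) - b * real_of_int (R 0))^(N+1) * a^((N+1)*y+N)
      * real_of_int (\<Prod>k\<in>{1..N}. lucU P Q k)"
proof (induction N)
  case 0
  then show ?case using R_bounds[OF ab rec h, of y] by (simp add: add.commute mult.commute)
next
  case (Suc N)
  define c where "c = real_of_int (R 1) - b * real_of_int (R 0)"
  have "b * real_of_int (R 0) \<le> 0" using h(3,5) by (simp add: mult_nonpos_nonneg)
  then have c0: "c \<ge> 0" unfolding c_def using h(4) by simp
  have Upos: "real_of_int (\<Prod>k\<in>{1..N}. lucU P Q k) \<ge> 0"
  proof -
    have "\<forall>k\<in>{1..N}. lucU P Q k \<ge> 0" using lucU_pos[OF h(1,2)] by blast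
    then have "0 \<le> (\<Prod>k\<in>{1..N}. lucU P Q k)" by (metis prod_nonneg)
    then show ?thesis by (simp only: of_int_0_le_iff)
  qed
  have U1: "real_of_int (lucU P Q (N+1)) \<le> a^N" by (rule U_le[OF ab h(1,2,5)])
  have U1p: "real_of_int (lucU P Q (N+1)) \<ge> 0" using lucU_pos[OF h(1,2), of N] by simp
  have Rn: "real_of_int (R (y + 2 + Suc N)) \<ge> a^(y+N+1) * c"
    using R_bounds[OF ab rec h, of "y+N+1"] unfolding c_def by (simp add: add.commute add.left_commute)
  have "a^(y+N+1) * c = c * a^(y+1) * a^N" by (simp add: power_add algebra_simps)
  also have "\<dots> \<ge> c * a^(y+1) * real_of_int (lucU P Q (N+1))"
    using U1 c0 h(6) by (simp add: mult_left_mono)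
  finally have Rn2: "real_of_int (R (y + 2 + Suc N)) \<ge> c * a^(y+1) * real_of_int (lucU P Q (N+1))"
    using Rn by linarith
  have IH: "real_of_int (\<Prod>i\<le>N. R (y+2+i)) \<ge> c^(N+1) * a^((N+1)*y+N) * real_of_int (\<Prod>k\<in>{1..N}. lucU P Q k)"
    using Suc unfolding c_def .
  have nn1: "c^(N+1) * a^((N+1)*y+N) * real_of_int (\<Prod>k\<in>{1..N}. lucU P Q k) \<ge> 0"
    using c0 h(6) Upos by simp
  have nn2: "c * a^(y+1) * real_of_int (lucU P Q (N+1)) \<ge> 0" using c0 h(6) U1p by simp
  have "real_of_int (\<Prod>i\<le>Suc N. R (y+2+i)) = real_of_int (\<Prod>i\<le>N. R (y+2+i)) * real_of_int (R (y+2+Suc N))"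
    by simp
  also have "\<dots> \<ge> (c^(N+1) * a^((N+1)*y+N) * real_of_int (\<Prod>k\<in>{1..N}. lucU P Q k))
      * (c * a^(y+1) * real_of_int (lucU P Q (N+1)))"
  proof -
    have p: "0 \<le> real_of_int (\<Prod>i\<le>N. R (y+2+i))" using IH nn1 by linarith
    show ?thesis using mult_mono[OF IH Rn2 p nn2] by simp
  qed
  finally have "real_of_int (\<Prod>i\<le>Suc N. R (y+2+i)) \<ge> (c^(N+1) * a^((N+1)*y+N) * real_of_int (\<Prod>k\<in>{1..N}. lucU P Q k))
      * (c * a^(y+1) * real_of_int (lucU P Q (N+1)))" .
  moreover have "(c^(N+1) * a^((N+1)*y+N) * real_of_int (\<Prod>k\<in>{1..N}. lucU P Q k))
      * (c * a^(y+1) * real_of_int (lucU P Q (N+1)))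
      = c^(Suc N+1) * a^((Suc N+1)*y+Suc N) * real_of_int (\<Prod>k\<in>{1..Suc N}. lucU P Q k)"
  proof -
    have e: "(Suc N+1)*y+Suc N = ((N+1)*y+N) + (y+1)" by simp
    show ?thesis unfolding e power_add by (simp add: prod.nat_ivl_Suc' algebra_simps)
  qed
  ultimately have "real_of_int (\<Prod>i\<le>Suc N. R (y+2+i)) \<ge>
      c^(Suc N+1) * a^((Suc N+1)*y+Suc N) * real_of_int (\<Prod>k\<in>{1..Suc N}. lucU P Q k)"
    by linarith
  then show ?case unfolding c_def .
qed

theorem theorem3:
  fixes P Q :: int and R :: "nat \<Rightarrow> int" and \<alpha> \<beta> :: real and n m :: nat
  assumes "P > 0" and "Q < 0" and "R 0 > 0" and "R 1 > 0"
    and "gcd P Q = 1" and "gcd (R 1) Q = 1"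
    and rec: "\<And>k. R (k + 2) = P * R (k + 1) - Q * R k"
    and "\<alpha>\<^sup>2 - of_int P * \<alpha> + of_int Q = 0"
    and "\<beta>\<^sup>2 - of_int P * \<beta> + of_int Q = 0"
    and "\<alpha> \<noteq> \<beta>" and "\<bar>\<alpha>\<bar> \<ge> \<bar>\<beta>\<bar>"
    and "n \<ge> 2" and "m \<ge> 1" and "m \<le> (n + 1) div 2 + 1"
  shows "real_of_int (Lcm (R ` {m..n})) \<ge>
    of_int (gcd (R 0) (R 1))
    * ((of_int (R 1) + of_int (R 0) * \<bar>\<beta>\<bar>) / of_int (gcd (R 0) (R 1))) powr ((real n - 1) / 2)
    * \<alpha> powr ((real n)\<^sup>2 / 4 - real n / 2 - 7 / 4)"
proof -
  note asm = assms
  define a where "a = \<alpha>"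
  define b where "b = \<beta>"
  have sumab: "real_of_int P = \<alpha> + \<beta>"
  proof -
    have "(\<alpha> - \<beta>) * (\<alpha> + \<beta> - real_of_int P) = 0"
      using asm(8,9) by (simp add: algebra_simps power2_eq_square)
    then show ?thesis using asm(10) by simp
  qed
  have prodab: "real_of_int Q = \<alpha> * \<beta>"
    using asm(8) sumab by (simp add: algebra_simps power2_eq_square)
  have Qr: "real_of_int Q < 0" using asm(2) by simp
  have Pr: "real_of_int P \<ge> 1" using asm(1) by simp
  have apos: "\<alpha> > 0" and bneg: "\<beta> < 0"
  proof -
    have "\<alpha> * \<beta> < 0" using prodab Qr by simp
    then have "(\<alpha> > 0 \<and> \<beta> < 0) \<or> (\<alpha> < 0 \<and> \<beta> > 0)"
      by (auto simp: mult_less_0_iff)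
    moreover have "\<not> (\<alpha> < 0 \<and> \<beta> > 0)" using asm(11) sumab Pr by auto
    ultimately show "\<alpha> > 0" "\<beta> < 0" by auto
  qed
  have age1: "\<alpha> \<ge> 1" using sumab Pr bneg by linarith
  have absb: "\<bar>\<beta>\<bar> = - \<beta>" using bneg by simp
  define c where "c = real_of_int (R 1) - \<beta> * real_of_int (R 0)"
  have ceq: "real_of_int (R 1) + real_of_int (R 0) * \<bar>\<beta>\<bar> = c"
    unfolding c_def absb by simp
  define g where "g = gcd (R 0) (R 1)"
  have gpos: "g > 0" unfolding g_def using asm(4) by simp
  have gle: "g \<le> R 1" unfolding g_def using asm(4) by (simp add: zdvd_imp_le)
  have cge: "c \<ge> real_of_int g"
  proof -
    have "\<beta> * real_of_int (R 0) \<le> 0" using bneg asm(3) by (simp add: mult_nonpos_nonneg)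
    then show ?thesis unfolding c_def using gle by linarith
  qed
  have gr: "real_of_int g > 0" using gpos by simp
  have rpos: "R k > 0" for k using R_pos[OF asm(1-4) rec] by blast
  have gcdc: "gcd (R k) (R (k+1)) = g" for k unfolding g_def by (rule R_gcd[OF asm(5,6) rec])
  have sh: "R (x + N + 1) = lucU P Q (N + 1) * R (x + 1) - Q * lucU P Q N * R x" for x N
    using R_shift[OF rec] by blast
  define M where "M = (n + 1) div 2 + 1"
  define N where "N = n - M"
  define y where "y = M - 2"
  have M2: "M \<ge> 2" unfolding M_def using asm(12) by simp
  have Mn: "M \<le> n" unfolding M_def using asm(12) by simp
  have yM: "y + 2 = M" unfolding y_def using M2 by simp
  have mM: "m \<le> M" unfolding M_def using asm(14) by simp
  define z where "z = Lcm (R ` {M..n})"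
  define Z where "Z = Lcm (R ` {m..n})"
  have zZ: "z dvd Z" unfolding z_def Z_def by (rule Lcm_subset) (use mM in auto)
  have Zpos: "Z > 0"
  proof -
    have "0 \<notin> R ` {m..n}" using rpos by (metis image_iff less_irrefl)
    then have "Z \<noteq> 0" unfolding Z_def by (simp add: Lcm_0_iff)
    moreover have "Z \<ge> 0" unfolding Z_def by simp
    ultimately show ?thesis by simp
  qed
  have zpos: "z > 0"
  proof -
    have "0 \<notin> R ` {M..n}" using rpos by (metis image_iff less_irrefl)
    then have "z \<noteq> 0" unfolding z_def by (simp add: Lcm_0_iff)
    moreover have "z \<ge> 0" unfolding z_def by simp
    ultimately show ?thesis by simp
  qed
  have zleZ: "z \<le> Z" using zZ Zpos by (rule zdvd_imp_le)
  have alldvd: "\<forall>i\<le>N. R (y+2+i) dvd z"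
  proof (intro allI impI)
    fix i assume "i \<le> N"
    then have "y + 2 + i \<in> {M..n}" using yM Mn unfolding N_def by auto
    then show "R (y+2+i) dvd z" unfolding z_def by simp
  qed
  have D: "(\<Prod>i\<le>N. R (y+2+i)) dvd z * g^N * (\<Prod>k\<in>{1..N}. lucU P Q k)"
    using window_dvd[OF gcdc sh] alldvd by blast
  have Upos: "(\<Prod>k\<in>{1..N}. lucU P Q k) > 0"
  proof -
    have "\<forall>k\<in>{1..N}. lucU P Q k > 0"
    proof
      fix k :: nat assume "k \<in> {1..N}"
      then obtain j where "k = j + 1" by (metis add.commute atLeastAtMost_iff le_Suc_ex)
      then show "lucU P Q k > 0" using lucU_pos[OF asm(1,2), of j] by simp
    qed
    then show ?thesis by (metis prod_pos)
  qed
  have "(\<Prod>i\<le>N. R (y+2+i)) \<le> z * g^N * (\<Prod>k\<in>{1..N}. lucU P Q k)"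
    using D by (rule zdvd_imp_le) (use zpos gpos Upos in simp)
  then have le1: "real_of_int (\<Prod>i\<le>N. R (y+2+i)) \<le>
      real_of_int z * real_of_int g ^ N * real_of_int (\<Prod>k\<in>{1..N}. lucU P Q k)"
    by (metis of_int_le_iff of_int_mult of_int_power)
  have le2: "real_of_int (\<Prod>i\<le>N. R (y+2+i)) \<ge>
      c^(N+1) * \<alpha>^((N+1)*y+N) * real_of_int (\<Prod>k\<in>{1..N}. lucU P Q k)"
    unfolding c_def by (rule window_lower[OF sumab prodab rec asm(1-4)]) (use bneg apos in auto)
  have Ur: "real_of_int (\<Prod>k\<in>{1..N}. lucU P Q k) > 0" using Upos by (simp only: of_int_0_less_iff)
  have key: "c^(N+1) * \<alpha>^((N+1)*y+N) \<le> real_of_int z * real_of_int g ^ N"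
    using le1 le2 Ur by (smt (verit) mult_right_le_imp_le)
  have ex: "(real n - 1) / 2 \<le> real (N + 1) \<and> (real n)\<^sup>2 / 4 - real n / 2 - 7 / 4 \<le> real ((N+1)*y+N)"
  proof -
    define K where "K = (n - 2) div 2"
    have "n = 2*K + 2 \<or> n = 2*K + 3"
      using asm(12) unfolding K_def by presburger
    then show ?thesis
    proof
      assume n: "n = 2*K + 2"
      have "M = K + 2" unfolding M_def n by simp
      then have "N = K" "y = K" unfolding N_def y_def n by auto
      then show ?thesis unfolding n by (simp add: power2_eq_square algebra_simps)
    next
      assume n: "n = 2*K + 3"
      have "M = K + 3" unfolding M_def n by simp
      then have "N = K" "y = K + 1" unfolding N_def y_def n by auto
      then show ?thesis unfolding n by (simp add: power2_eq_square algebra_simps)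
    qed
  qed
  have cg1: "c / real_of_int g \<ge> 1" using cge gr by simp
  have p1: "(c / real_of_int g) powr ((real n - 1) / 2) \<le> (c / real_of_int g) ^ (N+1)"
  proof -
    have "(c / real_of_int g) powr ((real n - 1) / 2) \<le> (c / real_of_int g) powr (real (N+1))"
      using ex cg1 by (intro powr_mono) auto
    also have "\<dots> = (c / real_of_int g) ^ (N+1)" using cg1 by (intro powr_realpow) simp
    finally show ?thesis .
  qed
  have p2: "\<alpha> powr ((real n)\<^sup>2 / 4 - real n / 2 - 7 / 4) \<le> \<alpha> ^ ((N+1)*y+N)"
  proof -
    have "\<alpha> powr ((real n)\<^sup>2 / 4 - real n / 2 - 7 / 4) \<le> \<alpha> powr (real ((N+1)*y+N))"
      using ex age1 by (intro powr_mono) auto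
    also have "\<dots> = \<alpha> ^ ((N+1)*y+N)" using apos by (intro powr_realpow) simp
    finally show ?thesis .
  qed
  have "real_of_int g * (c / real_of_int g) powr ((real n - 1) / 2)
        * \<alpha> powr ((real n)\<^sup>2 / 4 - real n / 2 - 7 / 4)
      \<le> real_of_int g * (c / real_of_int g) ^ (N+1) * \<alpha> ^ ((N+1)*y+N)"
  proof -
    have c0: "c > 0" using cge gr by linarith
    have "(c / real_of_int g) ^ (N+1) \<ge> 0" using c0 gr by simp
    moreover have "(c / real_of_int g) powr ((real n - 1) / 2) \<ge> 0" by simp
    ultimately show ?thesis using p1 p2 gr apos c0
      by (intro mult_mono mult_left_mono) auto
  qed
  also have "\<dots> = c^(N+1) * \<alpha>^((N+1)*y+N) / real_of_int g ^ N"
    using gr by (simp add: power_divide field_simps)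
  also have "\<dots> \<le> real_of_int z"
    using key gr by (simp add: pos_divide_le_eq)
  also have "\<dots> \<le> real_of_int Z" using zleZ by simp
  finally show ?thesis unfolding Z_def g_def ceq .
qed

end
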